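(* Let $A\neq0$ be a real $m\times n$ matrix, let $\varepsilon>0$, and let $\beta\in\mathbb R_m$ be such that $\beta^T$ lies in the range of $A$. Then $S(A,\beta)$ is a proper subset of $S(A,\beta,\varepsilon)$.
   Context: $\mathbb R_m$ denotes real row vectors of length $m$, $\mathbb R_m^+$ (resp. $\mathbb R_n^+$) those with all entries strictly positive. For $c\in\mathbb R_m^+$, $\alpha\in\mathbb R_m$, $c^\alpha:=\prod_i c_i^{\alpha_i}$. For a real $m\times n$ matrix $A$ with columns $\alpha_1^T,\dots,\alpha_n^T$, $\beta\in\mathbb R_m$ and $\varepsilon\ge0$, $S(A,\beta,\varepsilon)$ is the set of all $F:\mathbb R_n^+\to\mathbb R$ with $$|F(v_1c^{\alpha_1},\dots,v_nc^{\alpha_n})-F(v_1,\dots,v_n)c^\beta|\le\varepsilon|F(v_1,\dots,v_n)|c^\beta$$ for all $v_1,\dots,v_n>0$ and all $c\in\mathbb R_m^+$; $S(A,\beta):=S(A,\beta,0)$. *)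

theory Defs
  imports "HOL-Analysis.Analysis"
begin

text \<open>Vectors in R_m are modelled as real^'m, an m x n matrix as real^'n^'m
(row index 'm, column index 'n). Column j of A is alpha_j with (alpha_j)_i = A$i$j.\<close>

definition pos_vec :: "real^'k \<Rightarrow> bool" where
  "pos_vec x \<longleftrightarrow> (\<forall>i. x $ i > 0)"

definition vpow :: "real^'m \<Rightarrow> real^'m \<Rightarrow> real" where
  "vpow c \<alpha> = (\<Prod>i\<in>UNIV. (c $ i) powr (\<alpha> $ i))"

definition col :: "real^'n^'m \<Rightarrow> 'n \<Rightarrow> real^'m" where
  "col A j = (\<chi> i. A $ i $ j)"

definition S_eps :: "real^'n^'m \<Rightarrow> real^'m \<Rightarrow> real \<Rightarrow> (real^'n \<Rightarrow> real) set" where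
  "S_eps A \<beta> \<epsilon> = {F. \<forall>v c. pos_vec v \<longrightarrow> pos_vec c \<longrightarrow>
      \<bar>F (\<chi> j. v $ j * vpow c (col A j)) - F v * vpow c \<beta>\<bar> \<le> \<epsilon> * \<bar>F v\<bar> * vpow c \<beta>}"

definition S0 :: "real^'n^'m \<Rightarrow> real^'m \<Rightarrow> (real^'n \<Rightarrow> real) set" where
  "S0 A \<beta> = S_eps A \<beta> 0"

end

theory Submission
  imports Defs
begin

lemma vpow_pos: "pos_vec c \<Longrightarrow> vpow c a > 0"
  unfolding vpow_def pos_vec_def by (intro prod_pos) (metis powr_gt_zero less_irrefl)

lemma vpow_key:
  fixes A :: "real^'n^'m" and v :: "real^'n" and c :: "real^'m"
  assumes v: "pos_vec v" and c: "pos_vec c"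
  shows "vpow (\<chi> j. v $ j * vpow c (col A j)) x = vpow v x * vpow c (A *v x)"
proof -
  have "vpow (\<chi> j. v $ j * vpow c (col A j)) x
      = (\<Prod>j\<in>UNIV. (v $ j * vpow c (col A j)) powr (x $ j))"
    by (simp add: vpow_def)
  also have "\<dots> = (\<Prod>j\<in>UNIV. v $ j powr (x $ j) * (\<Prod>i\<in>UNIV. c $ i powr (A $ i $ j * x $ j)))"
    apply (rule prod.cong, simp)
    apply (simp add: powr_mult vpow_def prod_powr_distrib col_def)
    using c unfolding pos_vec_def by (simp add: powr_powr)
  also have "\<dots> = vpow v x * (\<Prod>j\<in>UNIV. \<Prod>i\<in>UNIV. c $ i powr (A $ i $ j * x $ j))"
    by (simp add: prod.distrib vpow_def)
  also have "(\<Prod>j\<in>UNIV. \<Prod>i\<in>UNIV. c $ i powr (A $ i $ j * x $ j))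
      = (\<Prod>i\<in>UNIV. \<Prod>j\<in>UNIV. c $ i powr (A $ i $ j * x $ j))"
    by (rule prod.swap)
  also have "\<dots> = vpow c (A *v x)"
    unfolding vpow_def matrix_vector_mult_def
    apply (rule prod.cong, simp)
    using c unfolding pos_vec_def by (simp add: powr_sum less_imp_neq[symmetric])
  finally show ?thesis .
qed

theorem mainTheorem8:
  fixes A :: "real^'n^'m" and \<beta> :: "real^'m" and \<epsilon> :: real
  assumes "A \<noteq> 0" and "\<epsilon> > 0" and "\<exists>x. A *v x = \<beta>"
  shows "S0 A \<beta> \<subset> S_eps A \<beta> \<epsilon>"
proof -
  obtain x where x: "A *v x = \<beta>" using assms(3) by blast
  obtain i0 j0 where ij: "A $ i0 $ j0 \<noteq> 0"
    using assms(1) by (metis vec_eq_iff zero_index)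
  have sub: "S0 A \<beta> \<subseteq> S_eps A \<beta> \<epsilon>"
  proof -
    have "\<bar>F (\<chi> j. v $ j * vpow c (col A j)) - F v * vpow c \<beta>\<bar> \<le> \<epsilon> * \<bar>F v\<bar> * vpow c \<beta>"
      if "F \<in> S0 A \<beta>" "pos_vec v" "pos_vec c" for F and v :: "real^'n" and c :: "real^'m"
    proof -
      have "0 \<le> \<epsilon> * \<bar>F v\<bar> * vpow c \<beta>"
        using assms(2) vpow_pos[OF that(3), of \<beta>] by simp
      moreover have "\<bar>F (\<chi> j. v $ j * vpow c (col A j)) - F v * vpow c \<beta>\<bar> \<le> 0 * \<bar>F v\<bar> * vpow c \<beta>"
        using that unfolding S0_def S_eps_def by blast
      ultimately show ?thesis by simp
    qed
    thus ?thesis unfolding S_eps_def[of A \<beta> \<epsilon>] by blast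
  qed
  define h :: "real^'n \<Rightarrow> real" where "h v = (if v $ j0 > 1 then 1 + \<epsilon> else 1)" for v
  define G where "G v = vpow v x * h v" for v
  have hpos: "h v \<ge> 1" for v using assms(2) by (simp add: h_def)
  have hdiff: "\<bar>h w - h v\<bar> \<le> \<epsilon> * h v" for w v
    using assms(2) by (auto simp: h_def)
  have Geq: "G (\<chi> j. v $ j * vpow c (col A j)) - G v * vpow c \<beta>
      = vpow v x * vpow c \<beta> * (h (\<chi> j. v $ j * vpow c (col A j)) - h v)"
    if "pos_vec v" "pos_vec c" for v c
    using vpow_key[OF that, of A x] x by (simp add: G_def algebra_simps)
  have GS: "G \<in> S_eps A \<beta> \<epsilon>"
    unfolding S_eps_def
  proof clarsimp
    fix v :: "real^'n" and c :: "real^'m" assume v: "pos_vec v" and c: "pos_vec c"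
    have p1: "vpow v x > 0" "vpow c \<beta> > 0" using vpow_pos v c by auto
    have "\<bar>G (\<chi> j. v $ j * vpow c (col A j)) - G v * vpow c \<beta>\<bar>
       = vpow v x * vpow c \<beta> * \<bar>h (\<chi> j. v $ j * vpow c (col A j)) - h v\<bar>"
      using Geq[OF v c] p1 by (simp add: abs_mult)
    also have "\<dots> \<le> vpow v x * vpow c \<beta> * (\<epsilon> * h v)"
      using hdiff p1 by (intro mult_left_mono) auto
    also have "\<dots> = \<epsilon> * \<bar>G v\<bar> * vpow c \<beta>"
      using p1 hpos[of v] by (simp add: G_def abs_mult)
    finally show "\<bar>G (\<chi> j. v $ j * vpow c (col A j)) - G v * vpow c \<beta>\<bar> \<le> \<epsilon> * \<bar>G v\<bar> * vpow c \<beta>" .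
  qed
  define v1 :: "real^'n" where "v1 = (\<chi> j. 1)"
  define c1 :: "real^'m" where "c1 = (\<chi> i. if i = i0 then (if A $ i0 $ j0 > 0 then 2 else 1/2) else 1)"
  have v1: "pos_vec v1" by (simp add: v1_def pos_vec_def)
  have c1: "pos_vec c1" by (simp add: c1_def pos_vec_def)
  have "vpow c1 (col A j0) = (\<Prod>i\<in>UNIV. c1 $ i powr (A $ i $ j0))"
    by (simp add: vpow_def col_def)
  also have "\<dots> = c1 $ i0 powr (A $ i0 $ j0)"
    proof -
    have "(\<Prod>i\<in>UNIV - {i0}. c1 $ i powr (A $ i $ j0)) = 1"
      by (rule prod.neutral) (simp add: c1_def)
    moreover have "(\<Prod>i\<in>UNIV. c1 $ i powr (A $ i $ j0)) = c1 $ i0 powr (A $ i0 $ j0) * (\<Prod>i\<in>UNIV - {i0}. c1 $ i powr (A $ i $ j0))"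
      by (rule prod.remove) auto
    ultimately show ?thesis by simp
  qed
  also have "\<dots> > 1"
  proof (cases "A $ i0 $ j0 > 0")
    case True
    hence "c1 $ i0 = 2" by (simp add: c1_def)
    thus ?thesis using True by (simp only: gr_one_powr)
  next
    case False
    hence neg: "A $ i0 $ j0 < 0" using ij by linarith
    have c: "c1 $ i0 = 1/2" using False by (simp add: c1_def)
    have "(1/2::real) powr (A $ i0 $ j0) = 2 powr (- A $ i0 $ j0)"
      by (simp add: powr_divide powr_minus_divide)
    also have "\<dots> > 1" using neg by (intro gr_one_powr) auto
    finally show ?thesis by (subst c)
  qed
  finally have big: "vpow c1 (col A j0) > 1" .
  have "h (\<chi> j. v1 $ j * vpow c1 (col A j)) = 1 + \<epsilon>" using big by (simp add: h_def v1_def)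
  moreover have "h v1 = 1" by (simp add: h_def v1_def)
  ultimately have ne: "G (\<chi> j. v1 $ j * vpow c1 (col A j)) - G v1 * vpow c1 \<beta> \<noteq> 0"
    using Geq[OF v1 c1] vpow_pos[OF v1, of x] vpow_pos[OF c1, of \<beta>] assms(2) by simp
  have "G \<notin> S0 A \<beta>"
  proof
    assume "G \<in> S0 A \<beta>"
    hence "\<bar>G (\<chi> j. v1 $ j * vpow c1 (col A j)) - G v1 * vpow c1 \<beta>\<bar> \<le> 0 * \<bar>G v1\<bar> * vpow c1 \<beta>"
      using v1 c1 unfolding S0_def S_eps_def by blast
    thus False using ne by simp
  qed
  with GS sub show ?thesis by blast
qed

end
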